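(* Let $\mathcal{B}$ be a cat-graph and $F$ a trihomomorphism $\mathcal{B}^{\mathrm{coop}}\to\mathbf{BiCat}$ (in the sense below). Fix objects $b,c$ of $\mathcal{B}$, $x$ of $Fb$ and $y$ of $Fc$. Assume $\mathcal{B}(b,c)$ is a finite category and $k_\bullet$ is a coweighting on its similarity matrix $\zeta_{\mathcal{B}(b,c)}$, and that for each 1-morphism $f : b\to c$ the category $Fb(x,f^*y)$ is finite and $k_\bullet$ is a coweighting on its similarity matrix $\zeta_{Fb(x,f^*y)}$. Then the function $(f,u)\mapsto k_{(f,u)} := k_f\,k_u$ is a coweighting on the similarity matrix of $\mathrm{Gr}(F)((b,x),(c,y))$, i.e. for every object $(g,v)$, \[ \sum_{(f,u)} k_f k_u\,\#\mathrm{Gr}(F)((b,x),(c,y))\big((f,u),(g,v)\big) = 1. \]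
   Context: For finite sets $I,J$ and $\zeta : I\times J\to\mathbb{Q}$, a coweighting is $k_\bullet : I\to\mathbb{Q}$ with $\sum_i k_i\zeta(i,j)=1$ for all $j$. The similarity matrix of a finite category $C$ is $\zeta_C(s,t)=\#C(s,t)$ on $\mathrm{ob}(C)\times\mathrm{ob}(C)$. A cat-graph $\mathcal{B}$ is a set of objects with a small category $\mathcal{B}(b,c)$ for each pair (objects = 1-morphisms, morphisms = 2-morphisms). A trihomomorphism $F : \mathcal{B}^{\mathrm{coop}}\to\mathbf{BiCat}$ consists of a bicategory $Fb$ for each object $b$, a lax functor $f^* : Fc\to Fb$ for each 1-morphism $f : b\to c$, and a lax natural transformation $\alpha^* : g^*\Rightarrow f^*$ for each 2-morphism $\alpha : f\Rightarrow g$, with component 1-morphisms $\alpha^*_y : g^*y\to f^*y$ in $Fb$. The Grothendieck construction $\mathrm{Gr}(F)$ is the cat-graph whose objects are pairs $(b,x)$ with $x\in\mathrm{ob}(Fb)$; a 1-morphism $(b,x)\to(c,y)$ is a pair $(f,u)$ with $f : b\to c$ in $\mathcal{B}$ and $u : x\to f^*y$ in $Fb$; a 2-morphism $(f,u)\Rightarrow(g,v)$ is a pair $(\alpha,\beta)$ with $\alpha : f\Rightarrow g$ in $\mathcal{B}$ and $\beta : u\Rightarrow\alpha^*_y\circ v$ a 2-morphism in $Fb$. *)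

theory Defs
  imports Main "HOL.Rat"
begin

record ('o, 'a) category =
  Obj  :: "'o set"
  Arr  :: "'a set"
  Dom  :: "'a \<Rightarrow> 'o"
  Cod  :: "'a \<Rightarrow> 'o"
  Ide  :: "'o \<Rightarrow> 'a"
  Comp :: "'a \<Rightarrow> 'a \<Rightarrow> 'a"   \<comment> \<open>Comp g f = g \<circ> f\<close>

definition is_category :: "('o, 'a) category \<Rightarrow> bool" where
  "is_category C \<longleftrightarrow>
     (\<forall>a\<in>Arr C. Dom C a \<in> Obj C \<and> Cod C a \<in> Obj C) \<and>
     (\<forall>s\<in>Obj C. Ide C s \<in> Arr C \<and> Dom C (Ide C s) = s \<and> Cod C (Ide C s) = s) \<and>
     (\<forall>f\<in>Arr C. \<forall>g\<in>Arr C. Cod C f = Dom C g \<longrightarrow>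
        Comp C g f \<in> Arr C \<and> Dom C (Comp C g f) = Dom C f \<and> Cod C (Comp C g f) = Cod C g) \<and>
     (\<forall>f\<in>Arr C. Comp C f (Ide C (Dom C f)) = f \<and> Comp C (Ide C (Cod C f)) f = f) \<and>
     (\<forall>f\<in>Arr C. \<forall>g\<in>Arr C. \<forall>h\<in>Arr C. Cod C f = Dom C g \<and> Cod C g = Dom C h \<longrightarrow>
        Comp C h (Comp C g f) = Comp C (Comp C h g) f)"

definition hom :: "('o, 'a) category \<Rightarrow> 'o \<Rightarrow> 'o \<Rightarrow> 'a set" where
  "hom C s t = {a \<in> Arr C. Dom C a = s \<and> Cod C a = t}"

definition finite_category :: "('o, 'a) category \<Rightarrow> bool" where
  "finite_category C \<longleftrightarrow> is_category C \<and> finite (Obj C) \<and> finite (Arr C)"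

definition similarity_matrix :: "('o, 'a) category \<Rightarrow> 'o \<Rightarrow> 'o \<Rightarrow> rat" where
  "similarity_matrix C s t = of_nat (card (hom C s t))"

definition coweighting :: "'i set \<Rightarrow> 'j set \<Rightarrow> ('i \<Rightarrow> 'j \<Rightarrow> rat) \<Rightarrow> ('i \<Rightarrow> rat) \<Rightarrow> bool" where
  "coweighting I J \<zeta> k \<longleftrightarrow> (\<forall>j\<in>J. (\<Sum>i\<in>I. k i * \<zeta> i j) = 1)"

record ('b, 'f, 'a) cat_graph =
  CGOb  :: "'b set"
  CGHom :: "'b \<Rightarrow> 'b \<Rightarrow> ('f, 'a) category"

definition is_cat_graph :: "('b, 'f, 'a) cat_graph \<Rightarrow> bool" where
  "is_cat_graph B \<longleftrightarrow> (\<forall>b\<in>CGOb B. \<forall>c\<in>CGOb B. is_category (CGHom B b c))"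

record ('x, 'm, 'c) bicat_data =
  BOb    :: "'x set"
  BHom   :: "'x \<Rightarrow> 'x \<Rightarrow> ('m, 'c) category"
  HComp  :: "'m \<Rightarrow> 'm \<Rightarrow> 'm"   \<comment> \<open>HComp w v = w \<circ> v for v : x -> y, w : y -> z\<close>

definition is_bicat_data :: "('x, 'm, 'c) bicat_data \<Rightarrow> bool" where
  "is_bicat_data D \<longleftrightarrow>
     (\<forall>x\<in>BOb D. \<forall>y\<in>BOb D. is_category (BHom D x y)) \<and>
     (\<forall>x\<in>BOb D. \<forall>y\<in>BOb D. \<forall>z\<in>BOb D. \<forall>v\<in>Obj (BHom D x y). \<forall>w\<in>Obj (BHom D y z).
        HComp D w v \<in> Obj (BHom D x z))"

section \<open>Data of a trihomomorphism F : B^coop -> BiCat used by the Grothendieck construction\<close>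

record ('b, 'f, 'a, 'x, 'm, 'c) trihom_data =
  FB    :: "'b \<Rightarrow> ('x, 'm, 'c) bicat_data"
  Fstar :: "'b \<Rightarrow> 'b \<Rightarrow> 'f \<Rightarrow> 'x \<Rightarrow> 'x"
  Fcomp :: "'b \<Rightarrow> 'b \<Rightarrow> 'a \<Rightarrow> 'x \<Rightarrow> 'm"           \<comment> \<open>alpha : f => g, y |-> alpha^*_y : g^* y -> f^* y\<close>

definition is_trihom_data ::
  "('b, 'f, 'a) cat_graph \<Rightarrow> ('b, 'f, 'a, 'x, 'm, 'c) trihom_data \<Rightarrow> bool" where
  "is_trihom_data B F \<longleftrightarrow>
     (\<forall>b\<in>CGOb B. is_bicat_data (FB F b)) \<and>
     (\<forall>b\<in>CGOb B. \<forall>c\<in>CGOb B. \<forall>f\<in>Obj (CGHom B b c). \<forall>y\<in>BOb (FB F c).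
        Fstar F b c f y \<in> BOb (FB F b)) \<and>
     (\<forall>b\<in>CGOb B. \<forall>c\<in>CGOb B. \<forall>\<alpha>\<in>Arr (CGHom B b c). \<forall>y\<in>BOb (FB F c).
        Fcomp F b c \<alpha> y \<in> Obj (BHom (FB F b) (Fstar F b c (Cod (CGHom B b c) \<alpha>) y)
                                           (Fstar F b c (Dom (CGHom B b c) \<alpha>) y)))"

definition gr_objs ::
  "('b, 'f, 'a) cat_graph \<Rightarrow> ('b, 'f, 'a, 'x, 'm, 'c) trihom_data \<Rightarrow> 'b \<Rightarrow> 'x \<Rightarrow> 'b \<Rightarrow> 'x
   \<Rightarrow> ('f \<times> 'm) set" where
  "gr_objs B F b x c y =
     {(f, u). f \<in> Obj (CGHom B b c) \<and> u \<in> Obj (BHom (FB F b) x (Fstar F b c f y))}"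

definition gr_2cells ::
  "('b, 'f, 'a) cat_graph \<Rightarrow> ('b, 'f, 'a, 'x, 'm, 'c) trihom_data \<Rightarrow> 'b \<Rightarrow> 'x \<Rightarrow> 'b \<Rightarrow> 'x
   \<Rightarrow> ('f \<times> 'm) \<Rightarrow> ('f \<times> 'm) \<Rightarrow> ('a \<times> 'c) set" where
  "gr_2cells B F b x c y p q =
     (case p of (f, u) \<Rightarrow> case q of (g, v) \<Rightarrow>
       {(\<alpha>, \<beta>). \<alpha> \<in> hom (CGHom B b c) f g \<and>
          \<beta> \<in> hom (BHom (FB F b) x (Fstar F b c f y)) u (HComp (FB F b) (Fcomp F b c \<alpha> y) v)})"

definition gr_similarity ::
  "('b, 'f, 'a) cat_graph \<Rightarrow> ('b, 'f, 'a, 'x, 'm, 'c) trihom_data \<Rightarrow> 'b \<Rightarrow> 'x \<Rightarrow> 'b \<Rightarrow> 'x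
   \<Rightarrow> ('f \<times> 'm) \<Rightarrow> ('f \<times> 'm) \<Rightarrow> rat" where
  "gr_similarity B F b x c y p q = of_nat (card (gr_2cells B F b x c y p q))"

end

theory Submission
  imports Defs
begin

theorem lemma3p30:
  fixes B :: "('b, 'f, 'a) cat_graph"
    and F :: "('b, 'f, 'a, 'x, 'm, 'c) trihom_data"
    and b c :: 'b and x y :: 'x
    and kB :: "'f \<Rightarrow> rat" and kF :: "'f \<Rightarrow> 'm \<Rightarrow> rat"
  assumes "is_cat_graph B" and "is_trihom_data B F"
    and "b \<in> CGOb B" and "c \<in> CGOb B"
    and "x \<in> BOb (FB F b)" and "y \<in> BOb (FB F c)"
    and "finite_category (CGHom B b c)"
    and "coweighting (Obj (CGHom B b c)) (Obj (CGHom B b c))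
           (similarity_matrix (CGHom B b c)) kB"
    and "\<And>f. f \<in> Obj (CGHom B b c) \<Longrightarrow>
           finite_category (BHom (FB F b) x (Fstar F b c f y))"
    and "\<And>f. f \<in> Obj (CGHom B b c) \<Longrightarrow>
           coweighting (Obj (BHom (FB F b) x (Fstar F b c f y)))
                       (Obj (BHom (FB F b) x (Fstar F b c f y)))
                       (similarity_matrix (BHom (FB F b) x (Fstar F b c f y))) (kF f)"
  shows "coweighting (gr_objs B F b x c y) (gr_objs B F b x c y)
           (gr_similarity B F b x c y) (\<lambda>(f, u). kB f * kF f u)"
unfolding coweighting_def
proof
  fix q assume q: "q \<in> gr_objs B F b x c y"
  obtain g v where qgv: "q = (g, v)" by (cases q)
  let ?CB = "CGHom B b c"
  let ?H = "\<lambda>f. BHom (FB F b) x (Fstar F b c f y)"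
  let ?w = "\<lambda>f \<alpha>. HComp (FB F b) (Fcomp F b c \<alpha> y) v"
  have g: "g \<in> Obj ?CB" and v: "v \<in> Obj (?H g)" using q qgv by (auto simp: gr_objs_def)
  have finCB: "finite (Obj ?CB)" "finite (Arr ?CB)" using assms(7) by (auto simp: finite_category_def)
  have finH: "\<And>f. f \<in> Obj ?CB \<Longrightarrow> finite (Obj (?H f)) \<and> finite (Arr (?H f))"
    using assms(9) by (auto simp: finite_category_def)
  have bd: "is_bicat_data (FB F b)" using assms(2,3) by (auto simp: is_trihom_data_def)
  have wobj: "?w f \<alpha> \<in> Obj (?H f)" if f: "f \<in> Obj ?CB" and a: "\<alpha> \<in> hom ?CB f g" for f \<alpha>
  proof -
    have aA: "\<alpha> \<in> Arr ?CB" and ad: "Dom ?CB \<alpha> = f" and ac: "Cod ?CB \<alpha> = g" using a by (auto simp: hom_def)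
    have fc: "Fcomp F b c \<alpha> y \<in> Obj (BHom (FB F b) (Fstar F b c g y) (Fstar F b c f y))"
      using assms(2,3,4,6) aA ad ac unfolding is_trihom_data_def by metis
    have "Fstar F b c f y \<in> BOb (FB F b)" "Fstar F b c g y \<in> BOb (FB F b)"
      using assms(2,3,4,6) f g unfolding is_trihom_data_def by auto
    then show ?thesis using bd fc v assms(5) unfolding is_bicat_data_def by blast
  qed
  have card2: "gr_similarity B F b x c y (f, u) (g, v) =
      (\<Sum>\<alpha>\<in>hom ?CB f g. of_nat (card (hom (?H f) u (?w f \<alpha>))))"
    if f: "f \<in> Obj ?CB" for f u
  proof -
    have eq: "gr_2cells B F b x c y (f, u) (g, v) = Sigma (hom ?CB f g) (\<lambda>\<alpha>. hom (?H f) u (?w f \<alpha>))"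
      by (auto simp: gr_2cells_def)
    have fh: "finite (hom ?CB f g)" using finCB by (auto simp: hom_def)
    have fh2: "\<forall>\<alpha>\<in>hom ?CB f g. finite (hom (?H f) u (?w f \<alpha>))" using finH[OF f] by (auto simp: hom_def)
    show ?thesis unfolding gr_similarity_def eq card_SigmaI[OF fh fh2] by simp
  qed
  have inner: "(\<Sum>u\<in>Obj (?H f). kF f u * gr_similarity B F b x c y (f, u) (g, v)) = of_nat (card (hom ?CB f g))"
    if f: "f \<in> Obj ?CB" for f
  proof -
    have "(\<Sum>u\<in>Obj (?H f). kF f u * gr_similarity B F b x c y (f, u) (g, v))
        = (\<Sum>u\<in>Obj (?H f). \<Sum>\<alpha>\<in>hom ?CB f g. kF f u * of_nat (card (hom (?H f) u (?w f \<alpha>))))"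
      using card2[OF f] by (simp add: sum_distrib_left)
    also have "\<dots> = (\<Sum>\<alpha>\<in>hom ?CB f g. \<Sum>u\<in>Obj (?H f). kF f u * of_nat (card (hom (?H f) u (?w f \<alpha>))))"
      by (rule sum.swap)
    also have "\<dots> = (\<Sum>\<alpha>\<in>hom ?CB f g. 1)"
    proof (rule sum.cong[OF refl])
      fix \<alpha> assume a: "\<alpha> \<in> hom ?CB f g"
      show "(\<Sum>u\<in>Obj (?H f). kF f u * of_nat (card (hom (?H f) u (?w f \<alpha>)))) = 1"
        using assms(10)[OF f] wobj[OF f a] unfolding coweighting_def similarity_matrix_def by blast
    qed
    finally show ?thesis by simp
  qed
  have "(\<Sum>p\<in>gr_objs B F b x c y. (case p of (f, u) \<Rightarrow> kB f * kF f u) * gr_similarity B F b x c y p q)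
      = (\<Sum>(f,u)\<in>Sigma (Obj ?CB) (\<lambda>f. Obj (?H f)). kB f * kF f u * gr_similarity B F b x c y (f,u) (g,v))"
    unfolding qgv by (rule sum.cong) (auto simp: gr_objs_def)
  also have "\<dots> = (\<Sum>f\<in>Obj ?CB. \<Sum>u\<in>Obj (?H f). kB f * kF f u * gr_similarity B F b x c y (f,u) (g,v))"
    by (rule sum.Sigma[symmetric]) (use finCB finH in auto)
  also have "\<dots> = (\<Sum>f\<in>Obj ?CB. kB f * similarity_matrix ?CB f g)"
  proof (rule sum.cong[OF refl])
    fix f assume f: "f \<in> Obj ?CB"
    have "(\<Sum>u\<in>Obj (?H f). kB f * kF f u * gr_similarity B F b x c y (f,u) (g,v))
       = kB f * (\<Sum>u\<in>Obj (?H f). kF f u * gr_similarity B F b x c y (f, u) (g, v))"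
      by (simp add: sum_distrib_left mult.assoc)
    then show "(\<Sum>u\<in>Obj (?H f). kB f * kF f u * gr_similarity B F b x c y (f,u) (g,v)) = kB f * similarity_matrix ?CB f g"
      using inner[OF f] by (simp add: similarity_matrix_def)
  qed
  also have "\<dots> = 1" using assms(8) g unfolding coweighting_def by blast
  finally show "(\<Sum>p\<in>gr_objs B F b x c y. (case p of (f, u) \<Rightarrow> kB f * kF f u) * gr_similarity B F b x c y p q) = 1" .
qed

end
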